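(* Let $y=f(x)$ be an ROC curve and let $0\le a<b\le 1$. Suppose $(h,k)$ is an optimal point of this ROC curve for every $t\in[a,b]$, and let $c_t(h,k)=th+(1-t)(1-k)$ denote its normalized expected cost. Then the volume over the ROC surface on $[a,b]$ satisfies $$\mathrm{VOROS}(f,[a,b])=\frac{1}{b-a}\int_a^b\left(1-\frac{\big(c_t(h,k)\big)^2}{2t(1-t)}\right)dt.$$
   Context: ROC space is $[0,1]^2$, a point $(x,y)$ representing a binary classifier with false positive rate $x$ and true positive rate $y$. An ROC curve is the graph of a function $f:[0,1]\to[0,1]$ obtained by joining by line segments finitely many points of ROC space, including $(0,0)$ and $(1,1)$. For $t\in[0,1]$, the normalized expected cost of $(x,y)$ is $\mathrm{Cost}(x,y,t)=tx+(1-t)(1-y)$. The upper convex hull of the curve is the boundary of the convex hull of the points of its graph together with $(0,0)$, $(1,1)$, $(1,0)$. For $t\in[0,1]$, an optimal point of the ROC curve is a point $(h,k)$ of the upper convex hull having a supporting line of slope $\frac{t}{1-t}$ (vertical if $t=1$), i.e. the convex hull lies entirely in the closed half-plane bounded by the line through $(h,k)$ of that slope on the side of higher cost; equivalently $\mathrm{Cost}(h,k,t)\le\mathrm{Cost}(x,y,t)$ for all $(x,y)$ in that convex hull. The area of lesser classifiers $A_t(h,k)$ is the area of the set of $(h',k')\in[0,1]^2$ with $\mathrm{Cost}(h',k',t)>\mathrm{Cost}(h,k,t)$. The volume over the ROC surface on $[a,b]$ (with the standard Lebesgue measure on $t$) is $\mathrm{VOROS}(f,[a,b])=\frac{1}{b-a}\int_a^b\max_{x\in[0,1]}A_t(x,f(x))\,dt$.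 *)

theory Defs
  imports "HOL-Analysis.Analysis"
begin

definition roc_curve :: "(real \<Rightarrow> real) \<Rightarrow> bool" where
  "roc_curve f \<longleftrightarrow>
    (\<exists>ps :: (real \<times> real) list.
       length ps \<ge> 2 \<and>
       sorted_wrt (\<lambda>p q. fst p < fst q) ps \<and>
       hd ps = (0, 0) \<and> last ps = (1, 1) \<and>
       (\<forall>p \<in> set ps. p \<in> {0..1} \<times> {0..1}) \<and>
       (\<forall>i < length ps - 1. \<forall>x \<in> {fst (ps ! i) .. fst (ps ! Suc i)}.
          f x = snd (ps ! i) + (x - fst (ps ! i)) * (snd (ps ! Suc i) - snd (ps ! i))
                                / (fst (ps ! Suc i) - fst (ps ! i))))"

definition cost :: "real \<Rightarrow> real \<Rightarrow> real \<Rightarrow> real" where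
  "cost x y t = t * x + (1 - t) * (1 - y)"

definition roc_hull :: "(real \<Rightarrow> real) \<Rightarrow> (real \<times> real) set" where
  "roc_hull f = convex hull ({(x, f x) | x. x \<in> {0..1}} \<union> {(0, 0), (1, 1), (1, 0)})"

text \<open>(h,k) is an optimal point for t: it lies on the upper convex hull (boundary of the
  convex hull) and minimizes the cost over the convex hull.\<close>
definition optimal_point :: "(real \<Rightarrow> real) \<Rightarrow> real \<Rightarrow> real \<Rightarrow> real \<Rightarrow> bool" where
  "optimal_point f t h k \<longleftrightarrow>
     (h, k) \<in> frontier (roc_hull f) \<and>
     (\<forall>(x, y) \<in> roc_hull f. cost h k t \<le> cost x y t)"

definition area_lesser :: "real \<Rightarrow> real \<Rightarrow> real \<Rightarrow> real" where
  "area_lesser t h k =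
     measure lborel {p \<in> {0..1} \<times> {0..1}. cost (fst p) (snd p) t > cost h k t}"

text \<open>Volume over the ROC surface on [a,b] (max realised as Sup).\<close>
definition VOROS :: "(real \<Rightarrow> real) \<Rightarrow> real \<Rightarrow> real \<Rightarrow> real" where
  "VOROS f a b = 1 / (b - a) *
     (LINT t:{a..b}|lborel. (SUP x\<in>{0..1}. area_lesser t x (f x)))"

end

theory Submission
  imports Defs
begin

lemma seg_cover:
  fixes ps :: "(real \<times> real) list"
  assumes s: "sorted_wrt (\<lambda>p q. fst p < fst q) ps" and l: "length ps \<ge> 2"
    and x0: "fst (ps!0) \<le> x" and x1: "x \<le> fst (last ps)"
  shows "\<exists>i < length ps - 1. x \<in> {fst (ps!i)..fst (ps!Suc i)}"
proof -
  define J where "J = {j. j < length ps - 1 \<and> fst (ps!j) \<le> x}"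
  have fin: "finite J" unfolding J_def by simp
  have "0 \<in> J" using l x0 unfolding J_def by auto
  hence ne: "J \<noteq> {}" by auto
  define i where "i = Max J"
  have iJ: "i \<in> J" using fin ne i_def Max_in by blast
  have imax: "\<And>j. j \<in> J \<Longrightarrow> j \<le> i" using fin i_def by simp
  show ?thesis
  proof (cases "x \<le> fst (ps ! Suc i)")
    case True thus ?thesis using iJ unfolding J_def by auto
  next
    case False
    show ?thesis
    proof (cases "Suc i < length ps - 1")
      case True
      hence "Suc i \<in> J" using False unfolding J_def by auto
      thus ?thesis using imax by fastforce
    next
      case F2: False
      hence "Suc i = length ps - 1" using iJ unfolding J_def by auto
      hence "ps ! Suc i = last ps" using l by (metis last_conv_nth list.size(3) not_numeral_le_zero)
      thus ?thesis using False x1 by simp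
    qed
  qed
qed

lemma conv_le1:
  fixes y0 y1 lam :: real
  assumes "y0 \<le> 1" "y1 \<le> 1" "0 \<le> lam" "lam \<le> 1"
  shows "y0 + lam * (y1 - y0) \<le> 1"
proof -
  have "y0 + lam * (y1 - y0) = (1 - lam) * y0 + lam * y1" by algebra
  also have "\<dots> \<le> (1 - lam) * 1 + lam * 1"
    using assms by (intro add_mono mult_left_mono) auto
  finally show ?thesis by simp
qed

lemma roc_props:
  assumes "roc_curve f"
  shows "f 0 = 0" "f 1 = 1" "\<forall>x\<in>{0..1}. f x \<le> 1" "continuous_on {0..1} f"
proof -
  obtain ps :: "(real \<times> real) list" where l: "length ps \<ge> 2"
    and s: "sorted_wrt (\<lambda>p q. fst p < fst q) ps"
    and hd: "hd ps = (0, 0)" and lst: "last ps = (1, 1)"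
    and box: "\<forall>p \<in> set ps. p \<in> {0..1} \<times> {0..1}"
    and seg: "\<forall>i < length ps - 1. \<forall>x \<in> {fst (ps ! i) .. fst (ps ! Suc i)}.
          f x = snd (ps ! i) + (x - fst (ps ! i)) * (snd (ps ! Suc i) - snd (ps ! i))
                                / (fst (ps ! Suc i) - fst (ps ! i))"
    using assms unfolding roc_curve_def by (elim exE conjE) (rule that; assumption)
  have lt: "\<And>i j. i < j \<Longrightarrow> j < length ps \<Longrightarrow> fst (ps!i) < fst (ps!j)"
    using s unfolding sorted_wrt_iff_nth_less by blast
  have ne: "ps \<noteq> []" using l by auto
  have p0: "ps ! 0 = (0,0)" using hd ne by (simp add: hd_conv_nth)
  have pl: "ps ! (length ps - 1) = (1,1)" using lst ne by (simp add: last_conv_nth)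
  have inbox: "fst (ps!i) \<in> {0..1} \<and> snd (ps!i) \<in> {0..1}" if "i < length ps" for i
  proof -
    have "ps ! i \<in> set ps" using that by simp
    hence "ps ! i \<in> {0..1} \<times> {0..1}" using box by blast
    thus ?thesis by (simp add: mem_Times_iff)
  qed
  have a0: "0 < length ps - 1" using l by simp
  have b0: "(0::real) \<in> {fst (ps!0)..fst (ps!Suc 0)}" using lt[of 0 1] l p0 by simp
  show "f 0 = 0" using seg[rule_format, OF a0 b0] p0 by simp
  have a1: "length ps - 2 < length ps - 1" using l by simp
  have e1: "Suc (length ps - 2) = length ps - 1" using l by simp
  have b1: "(1::real) \<in> {fst (ps!(length ps - 2))..fst (ps!Suc (length ps - 2))}"
    using lt[of "length ps - 2" "length ps - 1"] l pl e1 inbox[of "length ps - 2"] by simp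
  have "f 1 = snd (ps ! (length ps - 2)) + (1 - fst (ps ! (length ps - 2))) * (snd (ps ! Suc (length ps - 2)) - snd (ps ! (length ps - 2)))
                                / (fst (ps ! Suc (length ps - 2)) - fst (ps ! (length ps - 2)))"
    using seg[rule_format, of "length ps - 2" 1] l pl lt[of "length ps - 2" "length ps - 1"]
    using seg[rule_format, OF a1 b1] e1 pl by simp
  moreover have "Suc (length ps - 2) = length ps - 1" using l by simp
  moreover have "fst (ps ! (length ps - 2)) < 1" using lt[of "length ps - 2" "length ps - 1"] l pl by simp
  ultimately show "f 1 = 1" using pl by simp
  have cov: "\<And>x. x \<in> {0..1} \<Longrightarrow> \<exists>i < length ps - 1. x \<in> {fst (ps!i)..fst (ps!Suc i)}"
    using seg_cover[OF s l] p0 lst by auto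
  show "\<forall>x\<in>{0..1}. f x \<le> 1"
  proof
    fix x :: real assume "x \<in> {0..1}"
    then obtain i where i: "i < length ps - 1" "x \<in> {fst (ps!i)..fst (ps!Suc i)}" using cov by blast
    define lam where "lam = (x - fst (ps ! i)) / (fst (ps ! Suc i) - fst (ps ! i))"
    have d: "fst (ps ! i) < fst (ps ! Suc i)" using lt[of i "Suc i"] i by auto
    have "f x = snd (ps ! i) + lam * (snd (ps ! Suc i) - snd (ps ! i))"
      using seg i unfolding lam_def by auto
    moreover have "0 \<le> lam" "lam \<le> 1" using i d unfolding lam_def by (auto simp: divide_simps)
    moreover have "snd (ps ! i) \<le> 1" "snd (ps ! Suc i) \<le> 1" using inbox[of i] inbox[of "Suc i"] i by auto
    ultimately show "f x \<le> 1" using conv_le1 by simp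
  qed
  have U: "{0..1} = (\<Union>i\<in>{..<length ps - 1}. {fst (ps!i)..fst (ps!Suc i)})"
  proof
    show "{0..1} \<subseteq> (\<Union>i\<in>{..<length ps - 1}. {fst (ps!i)..fst (ps!Suc i)})" using cov by blast
    show "(\<Union>i\<in>{..<length ps - 1}. {fst (ps!i)..fst (ps!Suc i)}) \<subseteq> {0..1}"
    proof clarify
      fix i x assume "i < length ps - 1" "x \<in> {fst (ps!i)..fst (ps!Suc i)}"
      moreover have "Suc i < length ps" using \<open>i < length ps - 1\<close> by simp
      ultimately show "x \<in> {0..1}" using inbox[of i] inbox[of "Suc i"] by auto
    qed
  qed
  have "continuous_on (\<Union>i\<in>{..<length ps - 1}. {fst (ps!i)..fst (ps!Suc i)}) f"
  proof (rule continuous_on_closed_Union)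
    fix i assume i: "i \<in> {..<length ps - 1}"
    show "continuous_on {fst (ps!i)..fst (ps!Suc i)} f"
    proof (rule continuous_on_eq)
    show "continuous_on {fst (ps!i)..fst (ps!Suc i)} (\<lambda>x. snd (ps ! i) + (x - fst (ps ! i)) * (snd (ps ! Suc i) - snd (ps ! i))
                                / (fst (ps ! Suc i) - fst (ps ! i)))"
      using lt[of i "Suc i"] i by (intro continuous_intros) (auto simp: less_diff_conv)
    show "\<And>x. x \<in> {fst (ps!i)..fst (ps!Suc i)} \<Longrightarrow> snd (ps ! i) + (x - fst (ps ! i)) * (snd (ps ! Suc i) - snd (ps ! i))
                                / (fst (ps ! Suc i) - fst (ps ! i)) = f x"
      using seg i by simp
    qed
  qed auto
  thus "continuous_on {0..1} f" using U by simp
qed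

lemma area_formula:
  fixes t c :: real
  assumes t0: "0 < t" and t1: "t < 1" and c0: "0 \<le> c" and ct: "c \<le> t" and ct1: "c \<le> 1 - t"
  shows "measure lborel {p \<in> {0..1} \<times> {0..1}. cost (fst p) (snd p) t > c} = 1 - c\<^sup>2 / (2 * t * (1 - t))"
proof -
  define A where "A = {p \<in> {0..1::real} \<times> {0..1::real}. cost (fst p) (snd p) t > c}"
  define s where "s x = min 1 (1 - (c - t * x) / (1 - t))" for x
  have Aeq: "A = ({0..1}\<times>{0..1}) \<inter> {p. c < t * fst p + (1-t) * (1 - snd p)}"
    by (auto simp: A_def cost_def)
  have op: "open {p::real\<times>real. c < t * fst p + (1-t) * (1 - snd p)}"
    by (intro open_Collect_less continuous_intros)
  have cl: "closed ({0..1::real}\<times>{0..1::real})" by (intro closed_Times closed_atLeastAtMost)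
  have Ab: "A \<in> sets borel" unfolding Aeq using op cl by (intro sets.Int borel_closed borel_open)
  have Ap: "A \<in> sets (lborel \<Otimes>\<^sub>M lborel)" using Ab by (metis lborel_prod sets_lborel)
  have slice: "emeasure lborel (Pair x -` A) = ennreal (s x) * indicator {0..1} x" for x
  proof (cases "x \<in> {0..1}")
    case False
    hence "Pair x -` A = {}" unfolding A_def by auto
    thus ?thesis using False by simp
  next
    case True
    show ?thesis
    proof (cases "c - t * x < 0")
      case True2: True
      have "Pair x -` A = {0..1}"
      proof (rule set_eqI)
        fix y
        show "y \<in> Pair x -` A \<longleftrightarrow> y \<in> {0..1}"
        proof
          assume y: "y \<in> {0..1}"
          have "(1 - t) * (1 - y) \<ge> 0" using y t1 by simp
          thus "y \<in> Pair x -` A" using y True True2 unfolding A_def cost_def by auto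
        qed (auto simp: A_def)
      qed
      moreover have "s x = 1" unfolding s_def using True2 t1 by (simp add: field_simps)
      ultimately show ?thesis using True by simp
    next
      case False2: False
      define u where "u = 1 - (c - t * x) / (1 - t)"
      have u0: "0 \<le> u" unfolding u_def using t1 ct1 True t0 False2
        by (simp add: field_simps) (smt (verit, best) mult_nonneg_nonneg)
      have u1: "u \<le> 1" unfolding u_def using t1 False2 by (simp add: field_simps)
      have "Pair x -` A = {0..<u}"
      proof (rule set_eqI)
        fix y
        have eq: "c < t * x + (1 - t) * (1 - y) \<longleftrightarrow> y < u"
          unfolding u_def using t1 by (simp add: field_simps)
        show "y \<in> Pair x -` A \<longleftrightarrow> y \<in> {0..<u}"
          unfolding A_def cost_def using eq True u1 by auto
      qed
      moreover have "s x = u" unfolding s_def u_def[symmetric] using u1 by simp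
      ultimately show ?thesis using True u0 by simp
    qed
  qed
  define d where "d = c / t"
  have d0: "0 \<le> d" and d1: "d \<le> 1" unfolding d_def using t0 c0 ct by (auto simp: field_simps)
  define F where "F x = x - (c * x - t * x\<^sup>2 / 2) / (1 - t)" for x
  have I1: "(s has_integral (F d - F 0)) {0..d}"
  proof (rule has_integral_eq[OF _ fundamental_theorem_of_calculus[OF d0]])
    fix x assume x: "x \<in> {0..d}"
    have "c - t * x \<ge> 0" using x t0 unfolding d_def by (simp add: field_simps)
    hence "1 - (c - t * x) / (1 - t) \<le> 1" using t1 by simp
    thus "1 - (c - t * x) / (1 - t) = s x" unfolding s_def by simp
  next
    fix x assume x: "x \<in> {0..d}"
    define k where "k = 1 / (1 - t)"
    have Fk: "F = (\<lambda>x. x - k * (c * x - t * x\<^sup>2 / 2))"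
      unfolding F_def k_def by (auto simp: fun_eq_iff)
    have "(F has_real_derivative (1 - k * (c - t * x))) (at x within {0..d})"
      unfolding Fk by (auto intro!: derivative_eq_intros)
    moreover have "1 - k * (c - t * x) = 1 - (c - t * x) / (1 - t)" unfolding k_def by simp
    ultimately have "(F has_real_derivative (1 - (c - t * x) / (1 - t))) (at x within {0..d})" by simp
    thus "(F has_vector_derivative (1 - (c - t * x) / (1 - t))) (at x within {0..d})"
      by (simp add: has_real_derivative_iff_has_vector_derivative)
  qed
  have c1: "((\<lambda>x. 1::real) has_integral (1 - d)) {d..1}"
    using has_integral_const_real[of "1::real" d 1] d1 by simp
  have I2: "(s has_integral (1 - d)) {d..1}"
  proof (rule has_integral_eq[OF _ c1])
    fix x assume x: "x \<in> {d..1}"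
    have "c - t * x \<le> 0" using x t0 unfolding d_def by (simp add: field_simps)
    hence "1 - (c - t * x) / (1 - t) \<ge> 1" using t1 by (simp add: field_simps)
    thus "1 = s x" unfolding s_def by simp
  qed
  have E: "F d - F 0 + (1 - d) = 1 - c\<^sup>2 / (2 * t * (1 - t))"
    unfolding F_def d_def using t0 t1 by (simp add: field_simps power2_eq_square)
  have I: "(s has_integral (1 - c\<^sup>2 / (2 * t * (1 - t)))) {0..1}"
    using has_integral_combine[OF d0 d1 I1 I2] unfolding E .
  have snn: "\<And>x. x \<in> {0..1} \<Longrightarrow> 0 \<le> s x"
  proof -
    fix x :: real assume x: "x \<in> {0..1}"
    have "t * x \<ge> 0" using x t0 by simp
    hence "c - t * x \<le> 1 - t" using ct1 by linarith
    thus "0 \<le> s x" unfolding s_def using t1 by (simp add: field_simps)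
  qed
  have "emeasure lborel A = emeasure (lborel \<Otimes>\<^sub>M lborel) A" by (simp add: lborel_prod)
  also have "\<dots> = (\<integral>\<^sup>+x. emeasure lborel (Pair x -` A) \<partial>lborel)"
    by (rule lborel.emeasure_pair_measure_alt[OF Ap])
  also have "\<dots> = (\<integral>\<^sup>+x. ennreal (s x) * indicator {0..1} x \<partial>lborel)"
    by (simp only: slice)
  also have "\<dots> = ennreal (1 - c\<^sup>2 / (2 * t * (1 - t)))"
    by (rule nn_integral_has_integral_lebesgue'[OF snn I])
  finally have "emeasure lborel A = ennreal (1 - c\<^sup>2 / (2 * t * (1 - t)))" .
  moreover have "0 \<le> 1 - c\<^sup>2 / (2 * t * (1 - t))"
    using has_integral_nonneg[OF I snn] by simp
  ultimately show ?thesis unfolding A_def[symmetric] by (rule measure_eq_emeasure_eq_ennreal[rotated])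
qed


lemma lesser_sets:
  fixes t c :: real
  shows "{p \<in> {0..1} \<times> {0..1}. cost (fst p) (snd p) t > c} \<in> sets lborel"
proof -
  have Aeq: "{p \<in> {0..1} \<times> {0..1}. cost (fst p) (snd p) t > c} = ({0..1}\<times>{0..1}) \<inter> {p. c < t * fst p + (1-t) * (1 - snd p)}"
    by (auto simp: cost_def)
  have op: "open {p::real\<times>real. c < t * fst p + (1-t) * (1 - snd p)}"
    by (intro open_Collect_less continuous_intros)
  have cl: "closed ({0..1::real}\<times>{0..1::real})" by (intro closed_Times closed_atLeastAtMost)
  show ?thesis unfolding Aeq sets_lborel using op cl by (intro sets.Int borel_closed borel_open)
qed

lemma lesser_mono:
  fixes t c c' :: real
  assumes "c \<le> c'"
  shows "measure lborel {p \<in> {0..1} \<times> {0..1}. cost (fst p) (snd p) t > c'}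
    \<le> measure lborel {p \<in> {0..1} \<times> {0..1}. cost (fst p) (snd p) t > c}"
proof (rule measure_mono_fmeasurable)
  show "{p \<in> {0..1} \<times> {0..1}. cost (fst p) (snd p) t > c'} \<subseteq> {p \<in> {0..1} \<times> {0..1}. cost (fst p) (snd p) t > c}"
    using assms by auto
  show "{p \<in> {0..1} \<times> {0..1}. cost (fst p) (snd p) t > c'} \<in> sets lborel" by (rule lesser_sets)
  have bx: "({0..1::real}\<times>{0..1::real}) \<in> fmeasurable lborel"
    by (intro fmeasurable_compact compact_Times compact_Icc)
  have sub: "{p \<in> {0..1} \<times> {0..1}. cost (fst p) (snd p) t > c} \<subseteq> {0..1::real}\<times>{0..1::real}"
    by (rule Collect_restrict)
  show "{p \<in> {0..1} \<times> {0..1}. cost (fst p) (snd p) t > c} \<in> fmeasurable lborel"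
    by (rule fmeasurableI2[OF bx sub lesser_sets])
qed

lemma sup_eq:
  assumes roc: "roc_curve f" and t0: "0 < t" and t1: "t < 1"
    and opt: "optimal_point f t h k"
  shows "(SUP x\<in>{0..1}. area_lesser t x (f x)) = 1 - (cost h k t)\<^sup>2 / (2 * t * (1 - t))"
proof -
  note P = roc_props[OF roc]
  define G where "G = (\<lambda>x. (x, f x)) ` {0..1::real}"
  have Geq: "{(x, f x) | x. x \<in> {0..1}} = G" unfolding G_def by auto
  define S where "S = G \<union> {(0, 0), (1, 1), (1, 0)}"
  have hull: "roc_hull f = convex hull S" unfolding roc_hull_def S_def Geq ..
  have "continuous_on {0..1::real} (\<lambda>x. (x, f x))"
    by (intro continuous_on_Pair continuous_on_id P(4))
  hence cG: "compact G" unfolding G_def by (intro compact_continuous_image compact_Icc)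
  have "finite {(0::real,0::real),(1,1),(1,0)}" by simp
  hence "compact {(0::real,0::real),(1,1),(1,0)}" by (rule finite_imp_compact)
  hence cS: "compact S" unfolding S_def by (rule compact_Un[OF cG])
  hence cH: "compact (roc_hull f)" unfolding hull by (rule compact_convex_hull)
  define c where "c = cost h k t"
  have fr: "(h, k) \<in> frontier (roc_hull f)" using opt unfolding optimal_point_def by (rule conjunct1)
  have hkH: "(h, k) \<in> roc_hull f"
    using frontier_subset_closed[OF compact_imp_closed[OF cH]] fr by (rule subsetD)
  have optH0: "\<forall>(x, y) \<in> roc_hull f. cost h k t \<le> cost x y t"
    using opt unfolding optimal_point_def by (rule conjunct2)
  have optH: "c \<le> cost x y t" if "(x, y) \<in> roc_hull f" for x y
    using optH0 that unfolding c_def by fast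
  have SH: "S \<subseteq> roc_hull f" unfolding hull by (rule hull_subset)
  define g where "g p = cost (fst p) (snd p) t" for p
  have "continuous_on S g" unfolding g_def cost_def by (intro continuous_intros)
  moreover have "S \<noteq> {}" unfolding S_def by simp
  ultimately obtain s0 where s0: "s0 \<in> S" and s0min: "\<And>y. y \<in> S \<Longrightarrow> g s0 \<le> g y"
    using continuous_attains_inf[OF cS] by blast
  have conv: "convex {p. g s0 \<le> g p}"
  proof -
    have "{p. g s0 \<le> g p} = {p. inner (t, -(1-t)) p \<ge> g s0 - (1 - t)}"
      by (auto simp: g_def cost_def inner_prod_def algebra_simps)
    thus ?thesis using convex_halfspace_ge by metis
  qed
  have "roc_hull f \<subseteq> {p. g s0 \<le> g p}" unfolding hull
    by (rule hull_minimal) (use s0min conv in auto)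
  hence "g s0 \<le> c" using hkH unfolding g_def c_def by auto
  moreover have "c \<le> g s0"
  proof -
    have "(fst s0, snd s0) \<in> roc_hull f" using SH s0 by auto
    thus ?thesis unfolding g_def by (rule optH)
  qed
  ultimately have cs0: "c = g s0" by simp
  have "(1, 1) \<in> roc_hull f" "(0, 0) \<in> roc_hull f" using SH unfolding S_def by auto
  hence c11: "c \<le> t" and c00: "c \<le> 1 - t" using optH[of 1 1] optH[of 0 0] unfolding cost_def by auto
  obtain x0 where x0: "x0 \<in> {0..1}" and x0c: "cost x0 (f x0) t = c"
  proof -
    consider "s0 \<in> G" | "s0 = (0,0)" | "s0 = (1,1)" | "s0 = (1,0)" using s0 unfolding S_def by auto
    thus ?thesis
    proof cases
      case 1 thus ?thesis using that cs0 unfolding G_def g_def by auto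
    next
      case 2 thus ?thesis using that[of 0] cs0 P(1) unfolding g_def by auto
    next
      case 3 thus ?thesis using that[of 1] cs0 P(2) unfolding g_def by auto
    next
      case 4
      hence "c = 1" using cs0 unfolding g_def cost_def by simp
      thus ?thesis using c11 t1 by simp
    qed
  qed
  have c0: "0 \<le> c"
  proof -
    have "f x0 \<le> 1" using P(3) x0 by blast
    hence "0 \<le> t * x0 + (1 - t) * (1 - f x0)" using x0 t0 t1 by simp
    thus ?thesis using x0c unfolding cost_def by simp
  qed
  have form: "measure lborel {p \<in> {0..1} \<times> {0..1}. cost (fst p) (snd p) t > c} = 1 - c\<^sup>2 / (2 * t * (1 - t))"
    by (rule area_formula[OF t0 t1 c0 c11 c00])
  show ?thesis unfolding c_def[symmetric]
  proof (rule cSup_eq_maximum)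
    show "1 - c\<^sup>2 / (2 * t * (1 - t)) \<in> (\<lambda>x. area_lesser t x (f x)) ` {0..1}"
      using x0 x0c form unfolding area_lesser_def by force
  next
    fix z assume "z \<in> (\<lambda>x. area_lesser t x (f x)) ` {0..1}"
    then obtain x where x: "x \<in> {0..1}" and z: "z = area_lesser t x (f x)" by blast
    have "(x, f x) \<in> roc_hull f" using SH x unfolding S_def G_def by auto
    hence "c \<le> cost x (f x) t" by (rule optH)
    thus "z \<le> 1 - c\<^sup>2 / (2 * t * (1 - t))" unfolding z area_lesser_def form[symmetric]
      by (rule lesser_mono)
  qed
qed

theorem theorem24:
  fixes f :: "real \<Rightarrow> real" and a b h k :: real
  assumes "roc_curve f"
    and "0 \<le> a" and "a < b" and "b \<le> 1"
    and "\<forall>t \<in> {a..b}. optimal_point f t h k"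
  shows "VOROS f a b =
           1 / (b - a) * (LINT t:{a..b}|lborel. 1 - (cost h k t)\<^sup>2 / (2 * t * (1 - t)))"
proof -
  define F where "F t = (SUP x\<in>{0..1}. area_lesser t x (f x))" for t
  define G where "G t = 1 - (cost h k t)\<^sup>2 / (2 * t * (1 - t))" for t
  have eq: "F t = G t" if "t \<in> {a<..<b}" for t
    unfolding F_def G_def using that assms by (intro sup_eq) auto
  define F' where "F' t = indicator {a..b} t *\<^sub>R F t" for t
  define G' where "G' t = indicator {a..b} t *\<^sub>R G t" for t
  have eq': "F' t = G' t" if "t \<noteq> a" "t \<noteq> b" for t
  proof (cases "t \<in> {a..b}")
    case True
    hence "t \<in> {a<..<b}" using that by auto
    thus ?thesis unfolding F'_def G'_def using eq by simp
  qed (simp add: F'_def G'_def)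
  have Gm: "G' \<in> borel_measurable lborel" unfolding G'_def G_def cost_def by measurable
  have Fm: "F' \<in> borel_measurable lborel"
  proof (rule measurable_discrete_difference[OF Gm, of "{a, b}"])
    show "\<And>x. x \<in> space lborel \<Longrightarrow> x \<notin> {a, b} \<Longrightarrow> G' x = F' x" using eq' by auto
  qed auto
  have AE: "AE t in lborel. G' t = F' t"
  proof -
    have "AE t in lborel. t \<noteq> a" "AE t in lborel. t \<noteq> b" by (rule AE_lborel_singleton)+
    thus ?thesis by eventually_elim (use eq' in auto)
  qed
  have "(LINT t:{a..b}|lborel. F t) = (LINT t:{a..b}|lborel. G t)"
    unfolding set_lebesgue_integral_def F'_def[symmetric] G'_def[symmetric]
    using integral_cong_AE[OF Fm Gm] AE by (metis (mono_tags, lifting) AE_mp AE_I2)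
  thus ?thesis unfolding VOROS_def F_def G_def by simp
qed

end
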